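(* Let $\varepsilon\in(0,1)$ and let $G_0$ be the symmetric game with payoff matrix $$U_0= \begin{pmatrix} 0 & -1 & \varepsilon & 0 \\ \varepsilon & 0 & -1 & 0 \\ -1 & \varepsilon & 0 & 0 \\ \frac{-1+\varepsilon}{3} & \frac{-1+\varepsilon}{3} & \frac{-1+\varepsilon}{3} & 0 \end{pmatrix}.$$ Let $n=(1/3,1/3,1/3,0)$ and $E_0=\{\lambda n+(1-\lambda)e_4:\lambda\in[0,1]\}\subset S_4$. If $C$ is a closed subset of $S_4$ disjoint from $E_0$, then there exists a neighborhood $\mathcal N$ of $U_0$ in the space of $4\times4$ real matrices such that, for every payoff matrix $U\in\mathcal N$ and every initial condition $x(0)\in C$, the solution of the Brown-von Neumann-Nash dynamics with payoff matrix $U$ satisfies $x_4(t)\to 0$ as $t\to+\infty$.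
   Context: The Brown-von Neumann-Nash dynamics for payoff matrix $U$ on $S_4$ is $\dot x_i=k_i(x)-x_i\sum_{j=1}^4 k_j(x)$ with $k_i(x)=\max(0,(Ux)_i-x\cdot Ux)$. $e_4$ is the fourth vertex of $S_4$. *)

theory Defs
  imports "HOL-Analysis.Analysis"
begin

text \<open>Coordinates of R^4 are indexed by the type 4 = {0,1,2,3};
  paper index i corresponds to index i-1 here (so e_4 is index 3).\<close>

definition simplex4 :: "(real^4) set" where
  "simplex4 = {x. (\<forall>i. 0 \<le> x $ i) \<and> (\<Sum>i\<in>UNIV. x $ i) = 1}"

definition bnn_k :: "real^4^4 \<Rightarrow> real^4 \<Rightarrow> 4 \<Rightarrow> real" where
  "bnn_k U x i = max 0 ((U *v x) $ i - x \<bullet> (U *v x))"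

definition bnn_field :: "real^4^4 \<Rightarrow> real^4 \<Rightarrow> real^4" where
  "bnn_field U x = (\<chi> i. bnn_k U x i - x $ i * (\<Sum>j\<in>UNIV. bnn_k U x j))"

definition U0 :: "real \<Rightarrow> real^4^4" where
  "U0 \<epsilon> = (\<chi> i j.
     if i = 0 then (if j = 0 then 0 else if j = 1 then -1 else if j = 2 then \<epsilon> else 0)
     else if i = 1 then (if j = 0 then \<epsilon> else if j = 1 then 0 else if j = 2 then -1 else 0)
     else if i = 2 then (if j = 0 then -1 else if j = 1 then \<epsilon> else if j = 2 then 0 else 0)
     else (if j = 3 then 0 else (-1 + \<epsilon>) / 3))"

definition nvec :: "real^4" where
  "nvec = (\<chi> i. if i = 3 then 0 else 1/3)"

definition E0 :: "(real^4) set" where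
  "E0 = {l *\<^sub>R nvec + (1 - l) *\<^sub>R axis 3 1 | l. l \<in> {0..1}}"

end

theory Submission
  imports Defs
begin

lemma nash_scalar:
 fixes p q r e A :: real
 assumes e: "0<e" "e<1" and nn: "0\<le>p" "0\<le>q" "0\<le>r" and s: "p+q+r=1"
 and A: "A = p*(-q+e*r)+q*(e*p-r)+r*(-p+e*q)"
 and a0: "-q+e*r-A \<le> 0" and a1: "e*p-r-A \<le> 0" and a2: "-p+e*q-A \<le> 0"
 and c0: "p*(-q+e*r-A) = 0" and c1: "q*(e*p-r-A)=0" and c2: "r*(-p+e*q-A)=0"
 shows "p=q \<and> q=r"
proof -
  have A': "A = (e-1)*(p*q+q*r+r*p)" unfolding A by algebra
  have "p \<noteq> 0"
  proof
    assume p0: "p = 0"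
    have "(1-e)*q*r \<ge> 0" using e nn by simp
    hence "e*q \<le> 0" using a2 unfolding A' p0 by (simp add: algebra_simps)
    hence "q = 0" using e nn by (simp add: mult_le_0_iff)
    hence "r = 1" "A = 0" using s p0 A' by auto
    thus False using a0 e \<open>q=0\<close> by simp
  qed
  moreover have "q \<noteq> 0"
  proof
    assume q0: "q = 0"
    have "(1-e)*r*p \<ge> 0" using e nn by simp
    hence "e*r \<le> 0" using a0 unfolding A' q0 by (simp add: algebra_simps)
    hence "r = 0" using e nn by (simp add: mult_le_0_iff)
    hence "p = 1" "A = 0" using s q0 A' by auto
    thus False using a1 e \<open>r=0\<close> by simp
  qed
  moreover have "r \<noteq> 0"
  proof
    assume r0: "r = 0"
    have "(1-e)*p*q \<ge> 0" using e nn by simp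
    hence "e*p \<le> 0" using a1 unfolding A' r0 by (simp add: algebra_simps)
    hence "p = 0" using e nn by (simp add: mult_le_0_iff)
    hence "q = 1" "A = 0" using s r0 A' by auto
    thus False using a2 e \<open>p=0\<close> by simp
  qed
  ultimately have E0: "-q+e*r-A = 0" "e*p-r-A = 0" "-p+e*q-A=0" using c0 c1 c2 by auto
  have "(1+e+e^2)*(p-q) = (1+e)*((p-r)+e*(p-q)) + ((r-q)+e*(r-p))" by algebra
  also have "\<dots> = 0" using E0 by (simp add: algebra_simps)
  finally have "(1+e+e^2)*(p-q) = 0" .
  moreover have "1+e+e^2 > 0" using e by (simp add: add_pos_nonneg)
  ultimately have pq: "p = q" by simp
  have "(p-r)+e*(p-q) = 0" using E0 by (simp add: algebra_simps)
  then show ?thesis using pq by simp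
qed

lemma lin_helper: "(X::real) = S2 - KK/3 \<Longrightarrow> X/2 - Y \<le> L \<Longrightarrow> Y \<le> Q \<Longrightarrow> Q = P \<Longrightarrow> KK \<le> 2*S2 \<Longrightarrow> S2/6 - P \<le> L"
  by linarith

lemma core_scalar:
  fixes k0 k1 k2 z0 z1 z2 b \<rho> K S2 :: real
  assumes k: "0\<le>k0" "0\<le>k1" "0\<le>k2" "k0=0 \<or> k1=0 \<or> k2=0"
    and z: "\<bar>z0\<bar> \<le> \<rho>" "\<bar>z1\<bar> \<le> \<rho>" "\<bar>z2\<bar> \<le> \<rho>"
    and b: "0<b" "b<1/2" and rho: "\<rho> = b/100"
    and K: "K = k0+k1+k2" and KB: "K \<le> 6*\<rho>+9*b*\<rho>^2"
    and S2: "S2 = k0^2+k1^2+k2^2" "S2 > 0"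
  shows "b*((k0 - K/3 - K*z0)^2 + (k1 - K/3 - K*z1)^2 + (k2 - K/3 - K*z2)^2) - K*S2 > 0"
proof -
  have sq: "\<And>u v::real. (u-v)^2 \<ge> u^2/2 - v^2"
  proof -
    fix u v :: real
    have "(u-v)^2 - (u^2/2 - v^2) = (u - 2 * v)^2/2" by (simp add: power2_eq_square field_simps)
    moreover have "(u - 2 * v)^2/2 \<ge> 0" by simp
    ultimately show "(u-v)^2 \<ge> u^2/2 - v^2" by linarith
  qed
  have su: "(k0-K/3)^2 + (k1-K/3)^2 + (k2-K/3)^2 = S2 - K^2/3"
    unfolding K S2 by (simp add: power2_eq_square field_simps)
  have K2: "K^2 \<le> 2*S2"
  proof -
    have "\<And>a c::real. (a+c)^2 \<le> 2*(a^2+c^2)"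
    proof -
      fix a c :: real have "0 \<le> (a-c)^2" by simp
      thus "(a+c)^2 \<le> 2*(a^2+c^2)" by (simp add: power2_eq_square algebra_simps)
    qed
    thus ?thesis using k(4) unfolding K S2 by (elim disjE) (simp_all add: add.commute)
  qed
  have zz: "z0^2 \<le> \<rho>^2" "z1^2 \<le> \<rho>^2" "z2^2 \<le> \<rho>^2"
    using z by (simp_all add: abs_le_square_iff power2_le_iff_abs_le del: power2_abs)
  have H1: "(k0 - K/3 - K*z0)^2 + (k1 - K/3 - K*z1)^2 + (k2 - K/3 - K*z2)^2
      \<ge> ((k0-K/3)^2 + (k1-K/3)^2 + (k2-K/3)^2)/2 - K^2*(z0^2+z1^2+z2^2)"
    using sq[of "k0-K/3" "K*z0"] sq[of "k1-K/3" "K*z1"] sq[of "k2-K/3" "K*z2"]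
    by (simp add: power_mult_distrib algebra_simps)
  have H2: "K^2*(z0^2+z1^2+z2^2) \<le> 2*S2*(3*\<rho>^2)"
    using mult_mono[OF K2, of "z0^2+z1^2+z2^2" "3*\<rho>^2"] zz S2 by simp
  have L: "(k0 - K/3 - K*z0)^2 + (k1 - K/3 - K*z1)^2 + (k2 - K/3 - K*z2)^2
      \<ge> S2/6 - 6*\<rho>^2*S2"
  proof -
    have "2*S2*(3*\<rho>^2) = 6*\<rho>^2*S2" by simp
    thus ?thesis using lin_helper[OF su H1 H2 _ K2] by (simp add: mult_ac)
  qed
  have Kn: "K \<ge> 0" using K k by simp
  have X1: "b*(S2/6 - 6*\<rho>^2*S2) - K*S2 \<ge> b*(S2/6 - 6*\<rho>^2*S2) - (6*\<rho>+9*b*\<rho>^2)*S2"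
    using mult_right_mono[OF KB, of S2] S2 by simp
  have X2: "b*(S2/6 - 6*\<rho>^2*S2) - (6*\<rho>+9*b*\<rho>^2)*S2 = S2*(b/6 - 6*\<rho> - 15*b*\<rho>^2)"
    by (simp add: algebra_simps)
  have X3: "b/6 - 6*\<rho> - 15*b*\<rho>^2 > 0"
  proof -
    have r0: "0 < \<rho>" "\<rho> \<le> 1" using b rho by auto
    have "\<rho>^2 \<le> \<rho>" using r0 by (simp add: power2_eq_square mult_le_one)
    hence "b*\<rho>^2 \<le> b*\<rho>" using b by (intro mult_left_mono) auto
    moreover have "b*\<rho> \<le> (1/2)*\<rho>" using b r0 by (intro mult_right_mono) auto
    ultimately show ?thesis using rho b by linarith
  qed
  have "S2*(b/6 - 6*\<rho> - 15*b*\<rho>^2) > 0" using X3 S2(2) by simp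
  hence "b*(S2/6 - 6*\<rho>^2*S2) - K*S2 > 0" using X1 X2 by linarith
  moreover have "b*((k0 - K/3 - K*z0)^2 + (k1 - K/3 - K*z1)^2 + (k2 - K/3 - K*z2)^2) \<ge> b*(S2/6 - 6*\<rho>^2*S2)"
    using L b by simp
  ultimately show ?thesis by linarith
qed

lemma four0: "(4::4) = 0" by simp
lemma sum4: "sum f (UNIV::4 set) = f 0 + f 1 + f 2 + f 3"
  using sum_4[of f] unfolding four0 by (simp add: ac_simps)
lemma idx_distinct[simp]: "(0::4) \<noteq> 1" "(0::4) \<noteq> 2" "(0::4) \<noteq> 3" "(1::4) \<noteq> 2" "(1::4) \<noteq> 3" "(2::4) \<noteq> 3"
  "(1::4) \<noteq> 0" "(2::4) \<noteq> 0" "(3::4) \<noteq> 0" "(2::4) \<noteq> 1" "(3::4) \<noteq> 1" "(3::4) \<noteq> 2"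
  by simp_all
lemma inner4: "(x::real^4) \<bullet> y = x$0*y$0 + x$1*y$1 + x$2*y$2 + x$3*y$3"
  by (simp add: inner_vec_def sum4)
lemma mv4: "((M::real^4^4) *v x) $ i = M$i$0*x$0 + M$i$1*x$1 + M$i$2*x$2 + M$i$3*x$3"
  by (simp add: matrix_vector_mult_def sum4)
lemma U0_mv:
  "(U0 e *v x) $ 0 = - x$1 + e * x$2"
  "(U0 e *v x) $ 1 = e * x$0 - x$2"
  "(U0 e *v x) $ 2 = - x$0 + e * x$1"
  "(U0 e *v x) $ 3 = (e - 1)/3 * (x$0 + x$1 + x$2)"
  by (simp_all add: mv4 U0_def algebra_simps add_divide_distrib diff_divide_distrib)

definition aa :: "real^4^4 \<Rightarrow> real^4 \<Rightarrow> 4 \<Rightarrow> real" where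
  "aa U x i = (U *v x)$i - x \<bullet> (U *v x)"
lemma bnn_k_aa: "bnn_k U x i = max 0 (aa U x i)" by (simp add: bnn_k_def aa_def)

definition Tf :: "real^4 \<Rightarrow> real" where
  "Tf x = ((x$0-x$1)^2 + (x$1-x$2)^2 + (x$2-x$0)^2)/2"
definition zc :: "real^4 \<Rightarrow> 4 \<Rightarrow> real" where
  "zc x i = x$i - (x$0+x$1+x$2)/3"

lemma avg_U0: "x \<bullet> (U0 e *v x) = x$0*(- x$1 + e * x$2) + x$1*(e * x$0 - x$2) + x$2*(- x$0 + e * x$1)
   + x$3*((e - 1)/3 * (x$0 + x$1 + x$2))"
  by (simp add: inner4 U0_mv)

lemma aa3: assumes "x$0+x$1+x$2+x$3 = 1"
  shows "aa (U0 e) x 3 = (e-1)/3 * Tf x"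
proof -
  have w: "x$3 = 1 - x$0 - x$1 - x$2" using assms by simp
  show ?thesis unfolding aa_def avg_U0 U0_mv Tf_def w
    by (simp add: field_simps power2_eq_square)
qed
lemma aa012: assumes "x$0+x$1+x$2+x$3 = 1"
  shows "aa (U0 e) x 0 = - zc x 1 + e * zc x 2 - (1-e)/2 * (2/3 * Tf x)"
    "aa (U0 e) x 1 = - zc x 2 + e * zc x 0 - (1-e)/2 * (2/3 * Tf x)"
    "aa (U0 e) x 2 = - zc x 0 + e * zc x 1 - (1-e)/2 * (2/3 * Tf x)"
proof -
  have w: "x$3 = 1 - x$0 - x$1 - x$2" using assms by simp
  show "aa (U0 e) x 0 = - zc x 1 + e * zc x 2 - (1-e)/2 * (2/3 * Tf x)"
    unfolding aa_def avg_U0 U0_mv Tf_def w zc_def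
    by (simp add: field_simps power2_eq_square)
  show "aa (U0 e) x 1 = - zc x 2 + e * zc x 0 - (1-e)/2 * (2/3 * Tf x)"
    unfolding aa_def avg_U0 U0_mv Tf_def w zc_def
    by (simp add: field_simps power2_eq_square)
  show "aa (U0 e) x 2 = - zc x 0 + e * zc x 1 - (1-e)/2 * (2/3 * Tf x)"
    unfolding aa_def avg_U0 U0_mv Tf_def w zc_def
    by (simp add: field_simps power2_eq_square)
qed
lemma Dz: "zc x 0 ^2 + zc x 1 ^2 + zc x 2^2 = 2/3 * Tf x"
  unfolding zc_def Tf_def by (simp add: field_simps power2_eq_square)


lemma all4: "(\<forall>i::4. P i) \<longleftrightarrow> P 0 \<and> P 1 \<and> P 2 \<and> P 3"
  using forall_4[of P] unfolding four0 by auto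

lemma simplex_iff: "x \<in> simplex4 \<longleftrightarrow> x$0 \<ge> 0 \<and> x$1 \<ge> 0 \<and> x$2 \<ge> 0 \<and> x$3 \<ge> 0 \<and> x$0+x$1+x$2+x$3 = 1"
  unfolding simplex4_def by (simp add: all4 sum4)

lemma vec4_eq: "(x::real^4) = y \<longleftrightarrow> x$0 = y$0 \<and> x$1 = y$1 \<and> x$2 = y$2 \<and> x$3 = y$3"
  by (simp add: vec_eq_iff all4)

lemma Tf_nonneg: "Tf x \<ge> 0" unfolding Tf_def by simp

lemma Tf0_E0: assumes "x \<in> simplex4" "Tf x = 0" shows "x \<in> E0"
proof -
  have "(x$0-x$1)^2 + (x$1-x$2)^2 + (x$2-x$0)^2 = 0" using assms(2) unfolding Tf_def by simp
  hence "(x$0-x$1)^2 = 0" "(x$1-x$2)^2 = 0"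
    using zero_le_power2[of "x$0-x$1"] zero_le_power2[of "x$1-x$2"] zero_le_power2[of "x$2-x$0"] by linarith+
  hence eq: "x$0 = x$1" "x$1 = x$2" by simp_all
  define l where "l = 3 * x$0"
  have s: "x$0 \<ge> 0" "x$3 \<ge> 0" "x$0+x$1+x$2+x$3 = 1" using assms(1) unfolding simplex_iff by auto
  have "l \<in> {0..1}" unfolding l_def using s eq by auto
  moreover have "x = l *\<^sub>R nvec + (1 - l) *\<^sub>R axis 3 1"
    unfolding vec4_eq using s eq by (simp add: nvec_def axis_def l_def)
  ultimately show ?thesis unfolding E0_def by blast
qed

lemma sum_xa: "x$0 * aa M x 0 + x$1 * aa M x 1 + x$2 * aa M x 2 + x$3 * aa M x 3
   = (x \<bullet> (M *v x)) * (1 - (x$0+x$1+x$2+x$3))"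
  unfolding aa_def inner4 by (simp add: algebra_simps)

lemma Tf_pos_aa: assumes e: "0<e" "e<1" and x: "x \<in> simplex4" and T: "Tf x > 0"
  shows "aa (U0 e) x 0 > 0 \<or> aa (U0 e) x 1 > 0 \<or> aa (U0 e) x 2 > 0"
proof (rule ccontr)
  assume "\<not> ?thesis"
  hence a: "aa (U0 e) x 0 \<le> 0" "aa (U0 e) x 1 \<le> 0" "aa (U0 e) x 2 \<le> 0" by auto
  have s: "x$0 \<ge> 0" "x$1 \<ge> 0" "x$2 \<ge> 0" "x$3 \<ge> 0" "x$0+x$1+x$2+x$3 = 1"
    using x unfolding simplex_iff by auto
  have "(e-1)*Tf x < 0" using e T by (simp add: mult_neg_pos)
  hence a3: "aa (U0 e) x 3 < 0" using aa3[OF s(5), of e] by simp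
  have sum0: "x$0 * aa (U0 e) x 0 + x$1 * aa (U0 e) x 1 + x$2 * aa (U0 e) x 2 + x$3 * aa (U0 e) x 3 = 0"
    using sum_xa[of x "U0 e"] s(5) by simp
  have t0: "x$0 * aa (U0 e) x 0 \<le> 0" using s a by (simp add: mult_nonneg_nonpos)
  have t1: "x$1 * aa (U0 e) x 1 \<le> 0" using s a by (simp add: mult_nonneg_nonpos)
  have t2: "x$2 * aa (U0 e) x 2 \<le> 0" using s a by (simp add: mult_nonneg_nonpos)
  have t3: "x$3 * aa (U0 e) x 3 \<le> 0" using s a3 by (simp add: mult_nonneg_nonpos)
  have z: "x$0 * aa (U0 e) x 0 = 0" "x$1 * aa (U0 e) x 1 = 0" "x$2 * aa (U0 e) x 2 = 0"
     "x$3 * aa (U0 e) x 3 = 0" using sum0 t0 t1 t2 t3 by linarith+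
  have w0: "x$3 = 0" using z(4) a3 by simp
  define A where "A = x$0*(-x$1+e*x$2)+x$1*(e*x$0-x$2)+x$2*(-x$0+e*x$1)"
  have aaA: "aa (U0 e) x 0 = -x$1+e*x$2-A" "aa (U0 e) x 1 = e*x$0-x$2-A" "aa (U0 e) x 2 = -x$0+e*x$1-A"
    unfolding aa_def avg_U0 U0_mv A_def w0 by simp_all
  have "x$0 = x$1 \<and> x$1 = x$2"
    by (rule nash_scalar[OF e s(1-3) _ A_def]) (use s w0 a z aaA in auto)
  hence "Tf x = 0" unfolding Tf_def by simp
  thus False using T by simp
qed

definition Vf :: "real \<Rightarrow> real^4 \<Rightarrow> real" where
  "Vf e x = (\<Sum>i\<in>UNIV. (bnn_k (U0 e) x i)^2)"

lemma Tf0_aa: assumes "x$0+x$1+x$2+x$3 = 1" "Tf x = 0"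
  shows "aa (U0 e) x i = 0"
proof -
  have "(x$0-x$1)^2 + (x$1-x$2)^2 + (x$2-x$0)^2 = 0" using assms(2) unfolding Tf_def by simp
  hence "(x$0-x$1)^2 = 0" "(x$1-x$2)^2 = 0"
    using zero_le_power2[of "x$0-x$1"] zero_le_power2[of "x$1-x$2"] zero_le_power2[of "x$2-x$0"] by linarith+
  hence eq: "x$0 = x$1" "x$1 = x$2" by simp_all
  hence zc: "zc x 0 = 0" "zc x 1 = 0" "zc x 2 = 0" unfolding zc_def by auto
  have "i = 0 \<or> i = 1 \<or> i = 2 \<or> i = 3" using all4[of "\<lambda>j. j=0 \<or> j=1 \<or> j=2 \<or> j=3"] by auto
  thus ?thesis using aa012[OF assms(1), of e] aa3[OF assms(1), of e] zc assms(2) by auto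
qed

lemma Vf_pos_Tf: assumes "x \<in> simplex4" "Vf e x > 0" shows "Tf x > 0"
proof (rule ccontr)
  assume "\<not> Tf x > 0"
  hence "Tf x = 0" using Tf_nonneg[of x] by simp
  moreover have "x$0+x$1+x$2+x$3 = 1" using assms(1) unfolding simplex_iff by auto
  ultimately have "\<And>i. aa (U0 e) x i = 0" using Tf0_aa by blast
  hence "Vf e x = 0" unfolding Vf_def bnn_k_aa by simp
  thus False using assms(2) by simp
qed

lemma Tf_pos_Vf: assumes "0<e" "e<1" "x \<in> simplex4" "Tf x > 0" shows "Vf e x > 0"
proof -
  obtain i where "aa (U0 e) x i > 0" using Tf_pos_aa[OF assms] by blast
  hence p: "(bnn_k (U0 e) x i)^2 > 0" unfolding bnn_k_aa by simp
  have q: "(\<Sum>j\<in>UNIV. (bnn_k (U0 e) x j)^2) \<ge> (bnn_k (U0 e) x i)^2"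
    by (rule member_le_sum) auto
  show ?thesis unfolding Vf_def using p q by linarith
qed


lemma maxa: "max 0 (a::real) * a = (max 0 a)^2"
  by (simp add: max_def power2_eq_square)

lemma W_general:
  fixes M :: "real^4^4" and x :: "real^4"
  defines "f \<equiv> bnn_field M x"
  defines "K \<equiv> (\<Sum>j\<in>UNIV. bnn_k M x j)"
  shows "(\<Sum>i\<in>UNIV. bnn_k M x i * ((M *v f)$i - (f \<bullet> (M *v x) + x \<bullet> (M *v f))))
     = f \<bullet> (M *v f) - K * (\<Sum>i\<in>UNIV. (bnn_k M x i)^2)"
proof -
  let ?k = "bnn_k M x"
  let ?avg = "x \<bullet> (M *v x)"
  have kf: "\<And>i. f$i = ?k i - x$i * K" unfolding f_def bnn_field_def K_def by simp
  have ka: "\<And>i. ?k i * ((M *v x)$i - ?avg) = (?k i)^2"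
    unfolding bnn_k_def using maxa by simp
  have S2: "(\<Sum>i\<in>UNIV. (?k i)^2) = (\<Sum>i\<in>UNIV. ?k i * ((M *v x)$i - ?avg))"
    using ka by simp
  have Ks: "K = ?k 0 + ?k 1 + ?k 2 + ?k 3" unfolding K_def sum4 ..
  have fx: "f \<bullet> (M *v x) = (\<Sum>i\<in>UNIV. (?k i)^2)"
    unfolding S2 sum4 inner4[of f] kf Ks inner4[of x] by (simp add: algebra_simps)
  show ?thesis
    unfolding fx[symmetric] unfolding sum4 inner4[of f] inner4[of x] kf Ks by (simp add: algebra_simps)
qed

lemma fUf: assumes "f$3 = -(f$0+f$1+f$2)"
  shows "f \<bullet> (U0 e *v f) = (1-e)/2 * ((f$0)^2+(f$1)^2+(f$2)^2 - (f$0+f$1+f$2)^2/3)"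
  unfolding inner4 U0_mv assms by (simp add: field_simps power2_eq_square)

definition da :: "real \<Rightarrow> real^4 \<Rightarrow> real^4 \<Rightarrow> 4 \<Rightarrow> real" where
  "da e x f i = (U0 e *v f)$i - (f \<bullet> (U0 e *v x) + x \<bullet> (U0 e *v f))"

definition Wf :: "real \<Rightarrow> real^4^4 \<Rightarrow> real^4 \<Rightarrow> real" where
  "Wf e U x = (\<Sum>i\<in>UNIV. 2 * bnn_k (U0 e) x i * da e x (bnn_field U x) i)"

lemma k3_zero: assumes "e \<le> 1" "x \<in> simplex4" shows "bnn_k (U0 e) x 3 = 0"
proof -
  have "x$0+x$1+x$2+x$3 = 1" using assms(2) unfolding simplex_iff by auto
  hence "aa (U0 e) x 3 = (e-1)/3 * Tf x" by (rule aa3)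
  moreover have "(e-1)/3 * Tf x \<le> 0" using assms(1) Tf_nonneg[of x] by (simp add: mult_nonpos_nonneg)
  ultimately show ?thesis unfolding bnn_k_aa by simp
qed

lemma sq_id:
  fixes k0 k1 k2 x0 x1 x2 K :: real
  assumes "K = k0+k1+k2"
  shows "(k0 - x0*K)^2+(k1 - x1*K)^2+(k2-x2*K)^2 - ((k0 - x0*K)+(k1 - x1*K)+(k2-x2*K))^2/3
   = (k0 - K/3 - K*(x0 - (x0+x1+x2)/3))^2 + (k1 - K/3 - K*(x1 - (x0+x1+x2)/3))^2 + (k2 - K/3 - K*(x2 - (x0+x1+x2)/3))^2"
proof -
  define m where "m = ((k0 - x0*K)+(k1 - x1*K)+(k2-x2*K))/3"
  have "(k0 - x0*K)^2+(k1 - x1*K)^2+(k2-x2*K)^2 - ((k0 - x0*K)+(k1 - x1*K)+(k2-x2*K))^2/3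
     = (k0 - x0*K - m)^2+(k1 - x1*K - m)^2+(k2-x2*K - m)^2"
    unfolding m_def by (simp add: power2_eq_square field_simps)
  also have "m = K/3 - K*(x0+x1+x2)/3" unfolding m_def assms by (simp add: field_simps)
  finally show ?thesis by (simp add: algebra_simps)
qed

lemma W_U0:
  assumes e: "e \<le> 1" and x: "x \<in> simplex4"
  defines "k \<equiv> bnn_k (U0 e) x"
  defines "K \<equiv> k 0 + k 1 + k 2"
  shows "Wf e (U0 e) x = 2 * ((1-e)/2 * ((k 0 - K/3 - K*zc x 0)^2 + (k 1 - K/3 - K*zc x 1)^2
            + (k 2 - K/3 - K*zc x 2)^2) - K * ((k 0)^2 + (k 1)^2 + (k 2)^2))"
proof -
  define f where "f = bnn_field (U0 e) x"
  have k3: "k 3 = 0" unfolding k_def using k3_zero[OF e x] .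
  have KK: "(\<Sum>j\<in>UNIV. bnn_k (U0 e) x j) = K" unfolding sum4 K_def k_def[symmetric] k3 by simp
  have s: "x$0+x$1+x$2+x$3 = 1" using x unfolding simplex_iff by auto
  have kf: "\<And>i. f$i = k i - x$i * K" unfolding f_def bnn_field_def KK k_def by simp
  have x3: "x$3 = 1 - (x$0+x$1+x$2)" using s by simp
  have f3: "f$3 = -(f$0+f$1+f$2)" unfolding kf k3 x3 K_def by (simp add: algebra_simps)
  have "Wf e (U0 e) x = 2 * (f \<bullet> (U0 e *v f) - K * (\<Sum>i\<in>UNIV. (k i)^2))"
    using W_general[of "U0 e" x] unfolding Wf_def da_def f_def[symmetric] KK k_def[symmetric]
    using KK unfolding k_def by (simp add: sum_distrib_left[symmetric] mult.assoc)
  also have "(\<Sum>i\<in>UNIV. (k i)^2) = (k 0)^2 + (k 1)^2 + (k 2)^2" unfolding sum4 k3 by simp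
  also have "f \<bullet> (U0 e *v f) = (1-e)/2 * ((k 0 - K/3 - K*zc x 0)^2 + (k 1 - K/3 - K*zc x 1)^2
            + (k 2 - K/3 - K*zc x 2)^2)"
    unfolding fUf[OF f3] kf zc_def by (rule arg_cong[where f="\<lambda>t. (1-e)/2 * t"], rule sq_id, simp add: K_def)
  finally show ?thesis .
qed

lemma zc_sum: "zc x 0 + zc x 1 + zc x 2 = 0" unfolding zc_def by (simp add: field_simps)

lemma W_pos:
  assumes e: "0<e" "e<1" and x: "x \<in> simplex4" and T: "Tf x \<le> ((1-e)/200)^2" and V: "Vf e x > 0"
  shows "Wf e (U0 e) x > 0"
proof -
  define b where "b = (1-e)/2"
  define \<rho> where "\<rho> = b/100"
  have rho: "\<rho> = (1-e)/200" unfolding \<rho>_def b_def by simp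
  define k where "k = bnn_k (U0 e) x"
  define K where "K = k 0 + k 1 + k 2"
  have s: "x$0+x$1+x$2+x$3 = 1" using x unfolding simplex_iff by auto
  have k3: "k 3 = 0" unfolding k_def using k3_zero[of e x] e x by simp
  have S2: "(k 0)^2 + (k 1)^2 + (k 2)^2 > 0" using V unfolding Vf_def sum4 k_def[symmetric] k3 by simp
  note A = aa012[OF s, of e]
  have r0: "\<rho> > 0" using e rho by simp
  have zsq: "(zc x 0)^2 + (zc x 1)^2 + (zc x 2)^2 \<le> \<rho>^2"
  proof -
    have "(zc x 0)^2 + (zc x 1)^2 + (zc x 2)^2 = 2/3 * Tf x" by (rule Dz)
    also have "\<dots> \<le> Tf x" using Tf_nonneg[of x] by simp
    finally show ?thesis using T[folded rho] by linarith
  qed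
  have "(zc x 0)^2 \<le> \<rho>^2" "(zc x 1)^2 \<le> \<rho>^2" "(zc x 2)^2 \<le> \<rho>^2"
    using zsq zero_le_power2[of "zc x 0"] zero_le_power2[of "zc x 1"] zero_le_power2[of "zc x 2"]
    by linarith+
  hence zb: "\<bar>zc x 0\<bar> \<le> \<rho>" "\<bar>zc x 1\<bar> \<le> \<rho>" "\<bar>zc x 2\<bar> \<le> \<rho>"
    using r0 by (simp_all add: power2_le_iff_abs_le)
  have ez: "\<And>t. e * t \<le> \<bar>t\<bar>"
  proof -
    fix t :: real
    have "e * t \<le> e * \<bar>t\<bar>" using e by (intro mult_left_mono) auto
    also have "\<dots> \<le> 1 * \<bar>t\<bar>" using e by (intro mult_right_mono) auto
    finally show "e * t \<le> \<bar>t\<bar>" by simp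
  qed
  have Tn: "(1-e)/2 * (2/3 * Tf x) \<ge> 0" using e Tf_nonneg[of x] by simp
  have ab: "aa (U0 e) x 0 \<le> 2*\<rho>" "aa (U0 e) x 1 \<le> 2*\<rho>" "aa (U0 e) x 2 \<le> 2*\<rho>"
    using A ez[of "zc x 2"] ez[of "zc x 0"] ez[of "zc x 1"] zb Tn by linarith+
  have kb: "k 0 \<le> 2*\<rho>" "k 1 \<le> 2*\<rho>" "k 2 \<le> 2*\<rho>"
    unfolding k_def bnn_k_aa using ab r0 by simp_all
  have kn: "0 \<le> k 0" "0 \<le> k 1" "0 \<le> k 2" unfolding k_def bnn_k_aa by simp_all
  have "aa (U0 e) x 0 + aa (U0 e) x 1 + aa (U0 e) x 2 = -(zc x 0 + zc x 1 + zc x 2)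
       + e*(zc x 0 + zc x 1 + zc x 2) - 3*((1-e)/2 * (2/3 * Tf x))"
    unfolding A by (simp add: field_simps)
  hence "aa (U0 e) x 0 + aa (U0 e) x 1 + aa (U0 e) x 2 \<le> 0"
    unfolding zc_sum using Tn by simp
  hence "aa (U0 e) x 0 \<le> 0 \<or> aa (U0 e) x 1 \<le> 0 \<or> aa (U0 e) x 2 \<le> 0" by linarith
  hence kz: "k 0 = 0 \<or> k 1 = 0 \<or> k 2 = 0" unfolding k_def bnn_k_aa by auto
  have KB: "K \<le> 6*\<rho>+9*b*\<rho>^2"
  proof -
    have "K \<le> 6*\<rho>" unfolding K_def using kb by linarith
    moreover have "9*b*\<rho>^2 \<ge> 0" unfolding b_def using e by simp
    ultimately show ?thesis by linarith
  qed
  have b: "0 < b" "b < 1/2" unfolding b_def using e by auto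
  have core: "b*((k 0 - K/3 - K*zc x 0)^2 + (k 1 - K/3 - K*zc x 1)^2 + (k 2 - K/3 - K*zc x 2)^2)
       - K*((k 0)^2 + (k 1)^2 + (k 2)^2) > 0"
    by (rule core_scalar[OF kn kz zb b \<rho>_def K_def KB refl S2])
  show ?thesis using W_U0[of e x] e x core unfolding k_def[symmetric] K_def[symmetric] b_def by simp
qed


lemma gderiv: "((\<lambda>u::real. (max 0 u)^2) has_field_derivative 2 * max 0 u) (at u)"
proof (cases "u = 0")
  case True
  have ev: "\<forall>\<^sub>F y in at 0. max 0 (y::real) = ((max 0 y)^2 - (max 0 0)^2) / (y - 0)"
    unfolding eventually_at_filter by (auto simp: max_def power2_eq_square)
  have "((\<lambda>y::real. max 0 y) \<longlongrightarrow> max 0 0) (at 0)"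
    by (intro tendsto_intros)
  hence "((\<lambda>y::real. ((max 0 y)^2 - (max 0 0)^2) / (y - 0)) \<longlongrightarrow> 0) (at 0)"
    using tendsto_cong[OF ev] by simp
  thus ?thesis using True unfolding has_field_derivative_iff by simp
next
  case False
  show ?thesis
  proof (cases "u > 0")
    case True
    have ev: "\<forall>\<^sub>F y in nhds u. (max 0 y)^2 = y^2"
      using eventually_nhds_in_open[of "{0<..}" u] True by (auto elim!: eventually_mono)
    have "((\<lambda>y. y^2) has_field_derivative 2 * u) (at u)"
      by (auto intro!: derivative_eq_intros)
    thus ?thesis using True
      by (subst has_field_derivative_cong_eventually[where g="\<lambda>y. y^2"]) 
         (auto simp: eventually_at_filter intro: eventually_mono[OF ev])
  next
    case neg: False
    with False have u: "u < 0" by simp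
    have ev: "\<forall>\<^sub>F y in nhds u. (max 0 y)^2 = 0"
      using eventually_nhds_in_open[of "{..<0}" u] u by (auto elim!: eventually_mono)
    have "((\<lambda>y::real. 0) has_field_derivative 0) (at u)" by simp
    thus ?thesis using u
      by (subst has_field_derivative_cong_eventually[where g="\<lambda>y. 0"])
         (auto simp: eventually_at_filter intro: eventually_mono[OF ev])
  qed
qed

lemma comp_deriv:
  assumes "(x has_vector_derivative f) F"
  shows "((\<lambda>t. x t $ i) has_real_derivative f $ i) F"
  using bounded_linear.has_vector_derivative[OF bounded_linear_vec_nth assms]
  unfolding has_real_derivative_iff_has_vector_derivative .

lemma aa_deriv:
  assumes "(x has_vector_derivative f) (at t within S)"
  shows "((\<lambda>t. aa M (x t) i) has_real_derivative
     (M *v f)$i - (f \<bullet> (M *v x t) + x t \<bullet> (M *v f))) (at t within S)"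
proof -
  have d1: "((\<lambda>t. M *v x t) has_vector_derivative M *v f) (at t within S)"
    using bounded_linear.has_vector_derivative[OF matrix_vector_mul_bounded_linear assms] .
  have d2: "((\<lambda>t. (M *v x t) $ i) has_vector_derivative (M *v f)$i) (at t within S)"
    using bounded_linear.has_vector_derivative[OF bounded_linear_vec_nth d1] .
  have d3: "((\<lambda>t. x t \<bullet> (M *v x t)) has_vector_derivative (x t \<bullet> (M *v f) + f \<bullet> (M *v x t))) (at t within S)"
    using bounded_bilinear.has_vector_derivative[OF bounded_bilinear_inner assms d1] .
  have "((\<lambda>t. (M *v x t) $ i - x t \<bullet> (M *v x t)) has_vector_derivative
     (M *v f)$i - (x t \<bullet> (M *v f) + f \<bullet> (M *v x t))) (at t within S)"
    using has_vector_derivative_diff[OF d2 d3] .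
  thus ?thesis unfolding aa_def has_real_derivative_iff_has_vector_derivative by (simp add: add.commute)
qed

lemma V_deriv:
  assumes "(x has_vector_derivative bnn_field U (x t)) (at t within S)"
  shows "((\<lambda>t. Vf e (x t)) has_real_derivative Wf e U (x t)) (at t within S)"
proof -
  have "\<And>i. ((\<lambda>t. (bnn_k (U0 e) (x t) i)^2) has_real_derivative
      2 * bnn_k (U0 e) (x t) i * da e (x t) (bnn_field U (x t)) i) (at t within S)"
    unfolding bnn_k_aa da_def
    using DERIV_chain2[OF gderiv aa_deriv[OF assms]] by simp
  hence "((\<lambda>t. \<Sum>i\<in>UNIV. (bnn_k (U0 e) (x t) i)^2) has_real_derivative
      (\<Sum>i\<in>UNIV. 2 * bnn_k (U0 e) (x t) i * da e (x t) (bnn_field U (x t)) i)) (at t within S)"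
    by (intro DERIV_sum) auto
  thus ?thesis unfolding Vf_def Wf_def .
qed


lemma at_pos: "(0::real) < s \<Longrightarrow> at s within {0..} = at s"
  by (rule at_within_interior) simp

lemma nonincr:
  fixes \<phi> \<phi>' :: "real \<Rightarrow> real"
  assumes d: "\<And>t. t \<ge> 0 \<Longrightarrow> (\<phi> has_real_derivative \<phi>' t) (at t within {0..})"
    and n: "\<And>t. t > 0 \<Longrightarrow> \<phi>' t \<le> 0" and t: "a \<ge> 0" "a \<le> b"
  shows "\<phi> b \<le> \<phi> a"
proof (rule DERIV_nonpos_imp_decreasing_open[OF t(2)])
  fix s assume s: "a < s" "s < b"
  hence "(\<phi> has_real_derivative \<phi>' s) (at s)" using d[of s] at_pos[of s] t by simp
  thus "\<exists>y. (\<phi> has_real_derivative y) (at s) \<and> y \<le> 0" using n[of s] s t by auto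
next
  have "continuous_on {0..} \<phi>" by (rule DERIV_continuous_on) (use d in auto)
  thus "continuous_on {a..b} \<phi>" by (rule continuous_on_subset) (use t in auto)
qed

lemma bnn_k_nonneg: "bnn_k U y i \<ge> 0" unfolding bnn_k_def by simp

lemma traj_simplex:
  assumes hx: "\<forall>t\<ge>0. (x has_vector_derivative bnn_field U (x t)) (at t within {0..})"
    and x0: "x 0 \<in> simplex4" and t: "t \<ge> 0"
  shows "x t \<in> simplex4"
proof -
  define K where "K = (\<lambda>s. \<Sum>j\<in>UNIV. bnn_k U (x s) j)"
  have Kn: "\<And>s. K s \<ge> 0" unfolding K_def by (intro sum_nonneg) (simp add: bnn_k_nonneg)
  have fc: "\<And>s i. bnn_field U (x s) $ i = bnn_k U (x s) i - x s $ i * K s"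
    unfolding bnn_field_def K_def by simp
  have cd: "\<And>s i. s \<ge> 0 \<Longrightarrow> ((\<lambda>t. x t $ i) has_real_derivative bnn_field U (x s) $ i) (at s within {0..})"
    using hx comp_deriv by blast
  define \<sigma> where "\<sigma> = (\<lambda>s. x s $ 0 + x s $ 1 + x s $ 2 + x s $ 3)"
  have sd: "\<And>s. s \<ge> 0 \<Longrightarrow> (\<sigma> has_real_derivative K s * (1 - \<sigma> s)) (at s within {0..})"
  proof -
    fix s :: real assume s: "s \<ge> 0"
    have "(\<sigma> has_real_derivative bnn_field U (x s) $ 0 + bnn_field U (x s) $ 1 + bnn_field U (x s) $ 2
       + bnn_field U (x s) $ 3) (at s within {0..})"
      unfolding \<sigma>_def by (intro DERIV_add cd s)
    moreover have "bnn_field U (x s) $ 0 + bnn_field U (x s) $ 1 + bnn_field U (x s) $ 2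
       + bnn_field U (x s) $ 3 = K s * (1 - \<sigma> s)"
      unfolding fc \<sigma>_def using K_def[unfolded sum4] by (simp add: algebra_simps)
    ultimately show "(\<sigma> has_real_derivative K s * (1 - \<sigma> s)) (at s within {0..})" by simp
  qed
  have hd: "\<And>s. s \<ge> 0 \<Longrightarrow> ((\<lambda>s. (\<sigma> s - 1)^2) has_real_derivative - 2 * K s * (\<sigma> s - 1)^2) (at s within {0..})"
  proof -
    fix s :: real assume s: "s \<ge> 0"
    show "((\<lambda>s. (\<sigma> s - 1)^2) has_real_derivative - 2 * K s * (\<sigma> s - 1)^2) (at s within {0..})"
      using sd[OF s] by (auto intro!: derivative_eq_intros simp: power2_eq_square algebra_simps)
  qed
  have s0: "\<sigma> 0 = 1" using x0 unfolding simplex_iff \<sigma>_def by simp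
  have "(\<sigma> t - 1)^2 \<le> (\<sigma> 0 - 1)^2"
    by (rule nonincr[OF hd]) (use Kn t in \<open>auto intro!: mult_nonneg_nonneg\<close>)
  hence st: "\<sigma> t = 1" using s0 by simp
  have nn: "x t $ i \<ge> 0" for i
  proof -
    have gd: "\<And>s. s \<ge> 0 \<Longrightarrow> ((\<lambda>s. (max 0 (- x s $ i))^2) has_real_derivative
        2 * max 0 (- x s $ i) * (- bnn_field U (x s) $ i)) (at s within {0..})"
      using DERIV_chain2[OF gderiv DERIV_minus[OF cd]] by simp
    have neg: "2 * max 0 (- x s $ i) * (- bnn_field U (x s) $ i) \<le> 0" for s
    proof (cases "x s $ i \<ge> 0")
      case True thus ?thesis by simp
    next
      case False
      hence "x s $ i * K s \<le> 0" using Kn[of s] by (simp add: mult_nonpos_nonneg)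
      hence "- bnn_field U (x s) $ i \<le> 0" unfolding fc
        using bnn_k_nonneg[of U "x s" i] by simp
      moreover have "2 * max 0 (- x s $ i) \<ge> 0" by simp
      ultimately show ?thesis by (simp add: mult_nonneg_nonpos)
    qed
    have "(max 0 (- x t $ i))^2 \<le> (max 0 (- x 0 $ i))^2"
      by (rule nonincr[OF gd]) (use neg t in auto)
    moreover have "x 0 $ i \<ge> 0" using x0 unfolding simplex4_def by auto
    ultimately show ?thesis by (simp add: max_def split: if_splits)
  qed
  show ?thesis unfolding simplex_iff using nn st unfolding \<sigma>_def by auto
qed


lemma perturb:
  fixes g :: "real^4^4 \<Rightarrow> real^4 \<Rightarrow> real" and U1 :: "real^4^4"
  assumes cont: "continuous_on UNIV (\<lambda>p. g (fst p) (snd p))" and S: "compact S"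
    and pos: "\<forall>x\<in>S. g U1 x > 0"
  shows "\<exists>e>0. \<exists>d>0. \<forall>U x. dist U U1 < d \<longrightarrow> x \<in> S \<longrightarrow> g U x \<ge> e"
proof (cases "S = {}")
  case True thus ?thesis by (intro exI[of _ 1] conjI exI[of _ "1::real"]) auto
next
  case False
  have cp: "continuous_on S (\<lambda>x. (U1, x))" by (intro continuous_intros)
  have "continuous_on S (g U1)"
    using continuous_on_compose2[OF cont cp] by auto
  then obtain x0 where x0: "x0 \<in> S" "\<forall>y\<in>S. g U1 x0 \<le> g U1 y"
    using continuous_attains_inf[OF S False] by blast
  define m where "m = g U1 x0"
  have m: "m > 0" using pos x0 unfolding m_def by auto
  define T where "T = cball U1 1 \<times> S"
  have "compact T" unfolding T_def using S by (intro compact_Times) auto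
  hence "uniformly_continuous_on T (\<lambda>p. g (fst p) (snd p))"
    by (intro compact_uniformly_continuous continuous_on_subset[OF cont]) auto
  then obtain d where d: "d > 0" "\<forall>p\<in>T. \<forall>p'\<in>T. dist p' p < d \<longrightarrow> dist (g (fst p') (snd p')) (g (fst p) (snd p)) < m/2"
    unfolding uniformly_continuous_on_def using m by (meson half_gt_zero)
  have main: "\<forall>U x. dist U U1 < min d 1 \<longrightarrow> x \<in> S \<longrightarrow> g U x \<ge> m/2"
  proof (intro allI impI)
    fix U x assume U: "dist U U1 < min d 1" and x: "x \<in> S"
    have inT: "(U, x) \<in> T" "(U1, x) \<in> T" unfolding T_def using U x by (auto simp: dist_commute)
    have "dist (U, x) (U1, x) < d" using U by (simp add: dist_Pair_Pair)
    hence "dist (g U x) (g U1 x) < m/2" using d(2) inT by force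
    hence "\<bar>g U x - g U1 x\<bar> < m/2" by (simp add: dist_real_def)
    moreover have "g U1 x \<ge> m" using x0 x unfolding m_def by auto
    ultimately show "g U x \<ge> m/2" by linarith
  qed
  show ?thesis
    by (rule exI[of _ "m/2"], use m main d in \<open>auto intro!: exI[of _ "min d 1"]\<close>)
qed

lemma cont_bnn_k: "continuous_on UNIV (\<lambda>p::(real^4^4) \<times> (real^4). bnn_k (fst p) (snd p) i)"
  unfolding bnn_k_def mv4 inner4
  by (intro continuous_intros continuous_on_component continuous_on_fst continuous_on_snd continuous_on_id)

lemma cont_bnn_k_x: "continuous_on UNIV (\<lambda>x. bnn_k M x i)"
  unfolding bnn_k_def mv4 inner4
  by (intro continuous_intros continuous_on_component continuous_on_id)

lemma field_comp: "bnn_field U x $ j = bnn_k U x j - x$j * (\<Sum>l\<in>UNIV. bnn_k U x l)"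
  unfolding bnn_field_def by simp

lemma cont_field: "continuous_on UNIV (\<lambda>p::(real^4^4) \<times> (real^4). bnn_field (fst p) (snd p) $ j)"
  unfolding field_comp
  by (intro continuous_intros cont_bnn_k continuous_on_component continuous_on_snd continuous_on_id)

lemma cont_K: "continuous_on UNIV (\<lambda>p::(real^4^4) \<times> (real^4). \<Sum>l\<in>UNIV. bnn_k (fst p) (snd p) l)"
  by (intro continuous_intros cont_bnn_k)

lemma cont_a3: "continuous_on UNIV (\<lambda>p::(real^4^4) \<times> (real^4). - aa (fst p) (snd p) 3)"
  unfolding aa_def mv4 inner4
  by (intro continuous_intros continuous_on_component continuous_on_fst continuous_on_snd continuous_on_id)

lemma cont_W: "continuous_on UNIV (\<lambda>p::(real^4^4) \<times> (real^4). Wf e (fst p) (snd p))"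
proof -
  have cf: "continuous_on UNIV (\<lambda>p::(real^4^4) \<times> (real^4). bnn_field (fst p) (snd p))"
    unfolding bnn_field_def
    by (intro continuous_on_vec_lambda continuous_intros cont_bnn_k continuous_on_component continuous_on_snd)
  have cM: "continuous_on UNIV (\<lambda>p::(real^4^4) \<times> (real^4). U0 e *v bnn_field (fst p) (snd p))"
    by (rule continuous_on_compose2[OF linear_continuous_on[OF matrix_vector_mul_bounded_linear] cf]) auto
  have cM2: "continuous_on UNIV (\<lambda>p::(real^4^4) \<times> (real^4). U0 e *v snd p)"
    by (rule continuous_on_compose2[OF linear_continuous_on[OF matrix_vector_mul_bounded_linear] continuous_on_snd]) auto
  have ck: "\<And>i. continuous_on UNIV (\<lambda>p::(real^4^4) \<times> (real^4). bnn_k (U0 e) (snd p) i)"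
    by (rule continuous_on_compose2[OF cont_bnn_k_x continuous_on_snd]) auto
  show ?thesis unfolding Wf_def da_def
    by (intro continuous_intros continuous_on_component cM cM2 cf ck continuous_on_snd)
qed

lemma cont_V: "continuous_on UNIV (Vf e)"
  unfolding Vf_def by (intro continuous_intros cont_bnn_k_x)

lemma cont_T: "continuous_on UNIV Tf"
  unfolding Tf_def by (intro continuous_intros continuous_on_component continuous_on_id) auto

lemma compact_simplex: "compact simplex4"
proof -
  have "simplex4 \<subseteq> cball 0 4"
  proof
    fix x assume x: "x \<in> simplex4"
    have "norm x \<le> (\<Sum>i\<in>UNIV. \<bar>x$i\<bar>)" by (rule norm_le_l1_cart)
    also have "\<dots> = 1" using x unfolding simplex4_def by simp
    finally show "x \<in> cball 0 4" by simp
  qed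
  hence "bounded simplex4" using bounded_cball bounded_subset by blast
  moreover have "closed simplex4"
  proof -
    have eq: "simplex4 = (\<Inter>i. {x. 0 \<le> x$i}) \<inter> {x. (\<Sum>i\<in>UNIV. x$i) = 1}"
      unfolding simplex4_def by auto
    have c1: "closed {x::real^4. (\<Sum>i\<in>UNIV. x$i) = 1}"
      by (intro closed_Collect_eq continuous_intros continuous_on_component continuous_on_id)
    have c2: "\<And>i. closed {x::real^4. 0 \<le> x$i}"
      by (intro closed_Collect_le continuous_intros continuous_on_component continuous_on_id)
    show ?thesis unfolding eq by (intro closed_Int closed_INT ballI c1 c2)
  qed
  ultimately show ?thesis using compact_eq_bounded_closed by blast
qed


lemma barrier:
  fixes \<phi> \<phi>' :: "real \<Rightarrow> real"
  assumes d: "\<And>t. t \<ge> 0 \<Longrightarrow> (\<phi> has_real_derivative \<phi>' t) (at t within {0..})"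
    and pos: "\<And>t. t > 0 \<Longrightarrow> g1 < \<phi> t \<Longrightarrow> \<phi> t < g2 \<Longrightarrow> \<phi>' t \<ge> 0"
    and g: "g1 < g2" and init: "\<phi> 0 \<ge> g2" and T: "T \<ge> 0"
  shows "\<phi> T \<ge> g1"
proof (rule ccontr)
  assume "\<not> \<phi> T \<ge> g1"
  hence TT: "\<phi> T < g1" by simp
  have c: "continuous_on {0..} \<phi>" by (rule DERIV_continuous_on) (use d in auto)
  have cT: "continuous_on {0..T} \<phi>" by (rule continuous_on_subset[OF c]) auto
  define A where "A = {0..T} \<inter> \<phi> -` {..g1}"
  have "closed A" unfolding A_def by (rule continuous_closed_preimage[OF cT]) auto
  moreover have "{0..T} \<inter> A = A" unfolding A_def by auto
  ultimately have "compact A" using compact_Int_closed[OF compact_Icc[of 0 T], of A] by simp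
  moreover have "A \<noteq> {}" using TT T unfolding A_def by auto
  ultimately obtain t1 where t1: "t1 \<in> A" "\<forall>s\<in>A. t1 \<le> s" using compact_attains_inf by blast
  have t1b: "0 \<le> t1" "t1 \<le> T" "\<phi> t1 \<le> g1" using t1(1) unfolding A_def by auto
  have below: "\<phi> s > g1" if s: "0 \<le> s" "s < t1" for s
  proof (rule ccontr)
    assume "\<not> \<phi> s > g1"
    hence "s \<in> A" unfolding A_def using s t1b by auto
    thus False using t1(2) s by auto
  qed
  have ct1: "continuous_on {0..t1} \<phi>" by (rule continuous_on_subset[OF c]) auto
  define B where "B = {0..t1} \<inter> \<phi> -` {g2..}"
  have "closed B" unfolding B_def by (rule continuous_closed_preimage[OF ct1]) auto
  moreover have "{0..t1} \<inter> B = B" unfolding B_def by auto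
  ultimately have "compact B" using compact_Int_closed[OF compact_Icc[of 0 t1], of B] by simp
  moreover have "B \<noteq> {}" using init t1b unfolding B_def by auto
  ultimately obtain t0 where t0: "t0 \<in> B" "\<forall>s\<in>B. s \<le> t0" using compact_attains_sup by blast
  have t0b: "0 \<le> t0" "t0 \<le> t1" "\<phi> t0 \<ge> g2" using t0(1) unfolding B_def by auto
  have above: "\<phi> s < g2" if s: "t0 < s" "s \<le> t1" for s
  proof (rule ccontr)
    assume "\<not> \<phi> s < g2"
    hence "s \<in> B" unfolding B_def using s t0b by auto
    thus False using t0(2) s by auto
  qed
  have "\<phi> t0 \<le> \<phi> t1"
  proof (rule DERIV_nonneg_imp_increasing_open[OF t0b(2)])
    fix s assume s: "t0 < s" "s < t1"
    have "(\<phi> has_real_derivative \<phi>' s) (at s)" using d[of s] at_pos[of s] s t0b by simp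
    moreover have "\<phi>' s \<ge> 0" using pos[of s] below[of s] above[of s] s t0b by simp
    ultimately show "\<exists>y. (\<phi> has_real_derivative y) (at s) \<and> y \<ge> 0" by blast
  next
    show "continuous_on {t0..t1} \<phi>" by (rule continuous_on_subset[OF c]) (use t0b in auto)
  qed
  thus False using t0b t1b g by simp
qed

lemma decay:
  fixes \<psi> dpsi :: "real \<Rightarrow> real"
  assumes d: "\<And>t. t \<ge> 0 \<Longrightarrow> (\<psi> has_real_derivative dpsi t) (at t within {0..})"
    and le: "\<And>t. t > 0 \<Longrightarrow> dpsi t \<le> - c * \<psi> t" and c: "c > 0" and nn: "\<And>t. t \<ge> 0 \<Longrightarrow> \<psi> t \<ge> 0"
  shows "(\<psi> \<longlongrightarrow> 0) at_top"
proof -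
  have dd: "\<And>t. t \<ge> 0 \<Longrightarrow> ((\<lambda>t. \<psi> t * exp (c*t)) has_real_derivative
       dpsi t * exp (c*t) + \<psi> t * (exp (c*t) * c)) (at t within {0..})"
    by (auto intro!: derivative_eq_intros d)
  have bound: "\<psi> t \<le> \<psi> 0 * exp (- (c*t))" if t: "t \<ge> 0" for t
  proof -
    have "\<psi> t * exp (c*t) \<le> \<psi> 0 * exp (c*0)"
    proof (rule nonincr[OF dd])
      fix s :: real assume s: "s > 0"
      have "dpsi s + c * \<psi> s \<le> 0" using le[OF s] by simp
      hence "(dpsi s + c * \<psi> s) * exp (c * s) \<le> 0" by (simp add: mult_nonpos_nonneg)
      thus "dpsi s * exp (c * s) + \<psi> s * (exp (c * s) * c) \<le> 0" by (simp add: algebra_simps)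
    qed (use t in auto)
    hence "\<psi> t * exp (c*t) * exp (-(c*t)) \<le> \<psi> 0 * exp (-(c*t))" by simp
    thus ?thesis by (simp add: mult.assoc exp_minus[symmetric] exp_add[symmetric])
  qed
  have lim: "((\<lambda>t. \<psi> 0 * exp (- (c*t))) \<longlongrightarrow> 0) at_top"
  proof -
    have "filterlim (\<lambda>t. c*t) at_top at_top"
      using c by (intro filterlim_tendsto_pos_mult_at_top[OF tendsto_const c filterlim_ident])
    hence "filterlim (\<lambda>t. exp (c*t)) at_top at_top"
      by (rule filterlim_compose[OF exp_at_top])
    hence "((\<lambda>t. inverse (exp (c*t))) \<longlongrightarrow> 0) at_top"
      by (rule tendsto_inverse_0_at_top)
    hence "((\<lambda>t. \<psi> 0 * inverse (exp (c*t))) \<longlongrightarrow> \<psi> 0 * 0) at_top"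
      by (intro tendsto_intros)
    thus ?thesis by (simp add: exp_minus)
  qed
  show ?thesis
  proof (rule tendsto_sandwich[OF _ _ tendsto_const lim])
    show "\<forall>\<^sub>F t in at_top. 0 \<le> \<psi> t" using nn by (auto simp: eventually_at_top_linorder)
    show "\<forall>\<^sub>F t in at_top. \<psi> t \<le> \<psi> 0 * exp (- (c*t))" using bound by (auto simp: eventually_at_top_linorder)
  qed
qed


theorem proposition4:
  fixes \<epsilon> :: real and C :: "(real^4) set"
  assumes "0 < \<epsilon>" "\<epsilon> < 1"
    and "closed C" "C \<subseteq> simplex4" "C \<inter> E0 = {}"
  shows "\<exists>N :: (real^4^4) set. open N \<and> U0 \<epsilon> \<in> N \<and>
    (\<forall>U\<in>N. \<forall>x :: real \<Rightarrow> real^4.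
       x 0 \<in> C \<and>
       (\<forall>t\<ge>0. (x has_vector_derivative bnn_field U (x t)) (at t within {0..}))
       \<longrightarrow> ((\<lambda>t. x t $ 3) \<longlongrightarrow> 0) at_top)"
proof -
  note e = assms(1,2)
  define \<rho> where "\<rho> = (1-\<epsilon>)/200"
  have rho: "\<rho> > 0" unfolding \<rho>_def using e by simp
  have "compact (simplex4 \<inter> C)" using compact_simplex assms(3) by (rule compact_Int_closed)
  hence Cc: "compact C" using assms(4) by (simp add: Int_absorb1)
  have VC: "\<forall>x\<in>C. Vf \<epsilon> x > 0"
  proof
    fix x assume x: "x \<in> C"
    hence xs: "x \<in> simplex4" using assms(4) by auto
    have "Tf x \<noteq> 0" using Tf0_E0[OF xs] x assms(5) by auto
    hence "Tf x > 0" using Tf_nonneg[of x] by simp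
    thus "Vf \<epsilon> x > 0" by (rule Tf_pos_Vf[OF e xs])
  qed
  have cV2: "continuous_on UNIV (\<lambda>p::(real^4^4) \<times> (real^4). Vf \<epsilon> (snd p))"
    by (rule continuous_on_compose2[OF cont_V continuous_on_snd]) auto
  obtain ga da where ga: "ga > 0" "da > 0" "\<forall>U x. dist U (U0 \<epsilon>) < da \<longrightarrow> x \<in> C \<longrightarrow> Vf \<epsilon> x \<ge> ga"
    using perturb[OF cV2 Cc, of "U0 \<epsilon>"] VC by auto
  have gaC: "\<And>x. x \<in> C \<Longrightarrow> Vf \<epsilon> x \<ge> ga" using ga(3)[rule_format, of "U0 \<epsilon>"] ga(2) by simp
  define St where "St = simplex4 \<inter> {x. \<rho>^2 \<le> Tf x}"
  have "closed {x. \<rho>^2 \<le> Tf x}" by (rule closed_Collect_le[OF continuous_on_const cont_T])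
  hence Stc: "compact St" unfolding St_def using compact_simplex by (rule compact_Int_closed[rotated])
  have VSt: "\<forall>x\<in>St. Vf \<epsilon> x > 0"
  proof
    fix x assume "x \<in> St"
    hence xs: "x \<in> simplex4" and "Tf x \<ge> \<rho>^2" unfolding St_def by auto
    hence "Tf x > 0" using rho by (smt (verit) zero_less_power)
    thus "Vf \<epsilon> x > 0" by (rule Tf_pos_Vf[OF e xs])
  qed
  obtain gb db where gb: "gb > 0" "db > 0" "\<forall>U x. dist U (U0 \<epsilon>) < db \<longrightarrow> x \<in> St \<longrightarrow> Vf \<epsilon> x \<ge> gb"
    using perturb[OF cV2 Stc, of "U0 \<epsilon>"] VSt by auto
  have gbS: "\<And>x. x \<in> St \<Longrightarrow> Vf \<epsilon> x \<ge> gb" using gb(3)[rule_format, of "U0 \<epsilon>"] gb(2) by simp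
  define g2 where "g2 = min ga gb / 2"
  define g1 where "g1 = g2 / 2"
  have g: "0 < g1" "g1 < g2" "g2 < ga" "g2 < gb" unfolding g1_def g2_def using ga gb by auto
  have smallT: "Tf x \<le> ((1-\<epsilon>)/200)^2" if "x \<in> simplex4" "Vf \<epsilon> x \<le> g2" for x
  proof (rule ccontr)
    assume "\<not> ?thesis"
    hence "x \<in> St" unfolding St_def \<rho>_def using that by auto
    hence "Vf \<epsilon> x \<ge> gb" by (rule gbS)
    thus False using that g by simp
  qed
  define B where "B = simplex4 \<inter> ({x. g1 \<le> Vf \<epsilon> x} \<inter> {x. Vf \<epsilon> x \<le> g2})"
  have "closed ({x. g1 \<le> Vf \<epsilon> x} \<inter> {x. Vf \<epsilon> x \<le> g2})"
    by (intro closed_Int closed_Collect_le continuous_on_const cont_V)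
  hence Bc: "compact B" unfolding B_def using compact_simplex by (rule compact_Int_closed[rotated])
  have WB: "\<forall>x\<in>B. Wf \<epsilon> (U0 \<epsilon>) x > 0"
  proof
    fix x assume "x \<in> B"
    hence xs: "x \<in> simplex4" and v: "g1 \<le> Vf \<epsilon> x" "Vf \<epsilon> x \<le> g2" unfolding B_def by auto
    show "Wf \<epsilon> (U0 \<epsilon>) x > 0"
      by (rule W_pos[OF e xs smallT[OF xs v(2)]]) (use v g in simp)
  qed
  obtain e3 d3 where e3: "e3 > 0" "d3 > 0" "\<forall>U x. dist U (U0 \<epsilon>) < d3 \<longrightarrow> x \<in> B \<longrightarrow> Wf \<epsilon> U x \<ge> e3"
    using perturb[OF cont_W[of \<epsilon>] Bc, of "U0 \<epsilon>"] WB by auto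
  define R where "R = simplex4 \<inter> {x. g1 \<le> Vf \<epsilon> x}"
  have "closed {x. g1 \<le> Vf \<epsilon> x}" by (intro closed_Collect_le continuous_on_const cont_V)
  hence Rc: "compact R" unfolding R_def using compact_simplex by (rule compact_Int_closed[rotated])
  have KR: "\<forall>x\<in>R. (\<Sum>l\<in>UNIV. bnn_k (U0 \<epsilon>) x l) > 0"
  proof
    fix x assume "x \<in> R"
    hence v: "Vf \<epsilon> x > 0" unfolding R_def using g by auto
    have "\<exists>i. bnn_k (U0 \<epsilon>) x i \<noteq> 0"
    proof (rule ccontr)
      assume "\<not> ?thesis"
      hence "Vf \<epsilon> x = 0" unfolding Vf_def by simp
      thus False using v by simp
    qed
    then obtain i where i0: "bnn_k (U0 \<epsilon>) x i \<noteq> 0" by blast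
    have i: "bnn_k (U0 \<epsilon>) x i > 0" using i0 bnn_k_nonneg[of "U0 \<epsilon>" x i] by linarith
    have "bnn_k (U0 \<epsilon>) x i \<le> (\<Sum>l\<in>UNIV. bnn_k (U0 \<epsilon>) x l)"
      by (rule member_le_sum) (auto simp: bnn_k_nonneg)
    thus "(\<Sum>l\<in>UNIV. bnn_k (U0 \<epsilon>) x l) > 0" using i by linarith
  qed
  have aR: "\<forall>x\<in>R. - aa (U0 \<epsilon>) x 3 > 0"
  proof
    fix x assume "x \<in> R"
    hence xs: "x \<in> simplex4" and v: "Vf \<epsilon> x > 0" unfolding R_def using g by auto
    have T: "Tf x > 0" by (rule Vf_pos_Tf[OF xs v])
    have s: "x$0+x$1+x$2+x$3 = 1" using xs unfolding simplex_iff by auto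
    have "(\<epsilon>-1)/3 * Tf x < 0" using T e by (simp add: mult_neg_pos)
    thus "- aa (U0 \<epsilon>) x 3 > 0" using aa3[OF s, of \<epsilon>] by simp
  qed
  obtain e1 d1 where e1: "e1 > 0" "d1 > 0"
     "\<forall>U x. dist U (U0 \<epsilon>) < d1 \<longrightarrow> x \<in> R \<longrightarrow> (\<Sum>l\<in>UNIV. bnn_k U x l) \<ge> e1"
    using perturb[OF cont_K Rc, of "U0 \<epsilon>"] KR by auto
  obtain e2 d2 where e2: "e2 > 0" "d2 > 0"
     "\<forall>U x. dist U (U0 \<epsilon>) < d2 \<longrightarrow> x \<in> R \<longrightarrow> - aa U x 3 \<ge> e2"
    using perturb[OF cont_a3 Rc, of "U0 \<epsilon>"] aR by auto
  define N where "N = ball (U0 \<epsilon>) (min d1 (min d2 d3))"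
  have main: "((\<lambda>t. x t $ 3) \<longlongrightarrow> 0) at_top"
    if U: "U \<in> N" and x0: "x 0 \<in> C"
      and hx: "\<forall>t\<ge>0. (x has_vector_derivative bnn_field U (x t)) (at t within {0..})" for U x
  proof -
    have dU: "dist U (U0 \<epsilon>) < d1" "dist U (U0 \<epsilon>) < d2" "dist U (U0 \<epsilon>) < d3"
      using U unfolding N_def by (auto simp: dist_commute)
    have hs: "\<And>t. t \<ge> 0 \<Longrightarrow> x t \<in> simplex4"
      using traj_simplex[OF hx] x0 assms(4) by auto
    have hV: "Vf \<epsilon> (x t) \<ge> g1" if t: "t \<ge> 0" for t
    proof (rule barrier[where \<phi>="\<lambda>t. Vf \<epsilon> (x t)" and \<phi>'="\<lambda>t. Wf \<epsilon> U (x t)", OF _ _ g(2) _ t])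
      show "\<And>t. t \<ge> 0 \<Longrightarrow> ((\<lambda>t. Vf \<epsilon> (x t)) has_real_derivative Wf \<epsilon> U (x t)) (at t within {0..})"
        using V_deriv hx by blast
      show "Vf \<epsilon> (x 0) \<ge> g2" using gaC[OF x0] g by simp
      fix s :: real assume s: "s > 0" "g1 < Vf \<epsilon> (x s)" "Vf \<epsilon> (x s) < g2"
      hence "x s \<in> B" unfolding B_def using hs[of s] by auto
      hence "Wf \<epsilon> U (x s) \<ge> e3" using e3(3) dU by auto
      thus "Wf \<epsilon> U (x s) \<ge> 0" using e3 by simp
    qed
    have inR: "\<And>t. t \<ge> 0 \<Longrightarrow> x t \<in> R" unfolding R_def using hs hV by auto
    have K: "\<And>t. t \<ge> 0 \<Longrightarrow> (\<Sum>l\<in>UNIV. bnn_k U (x t) l) \<ge> e1" using e1(3) dU inR by blast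
    have k3: "\<And>t. t \<ge> 0 \<Longrightarrow> bnn_k U (x t) 3 = 0"
    proof -
      fix t :: real assume t: "t \<ge> 0"
      have "- aa U (x t) 3 \<ge> e2" using e2(3) dU inR[OF t] by blast
      thus "bnn_k U (x t) 3 = 0" unfolding bnn_k_aa using e2 by simp
    qed
    show ?thesis
    proof (rule decay[where dpsi="\<lambda>t. bnn_field U (x t) $ 3" and c=e1])
      show "\<And>t. t \<ge> 0 \<Longrightarrow> ((\<lambda>t. x t $ 3) has_real_derivative bnn_field U (x t) $ 3) (at t within {0..})"
        using comp_deriv hx by blast
      show "\<And>t. t \<ge> 0 \<Longrightarrow> x t $ 3 \<ge> 0" using hs unfolding simplex_iff by blast
      fix t :: real assume t: "t > 0"
      have nn: "x t $ 3 \<ge> 0" using hs[of t] t unfolding simplex_iff by auto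
      have "x t $ 3 * e1 \<le> x t $ 3 * (\<Sum>l\<in>UNIV. bnn_k U (x t) l)"
        using K[of t] t nn by (intro mult_left_mono) auto
      thus "bnn_field U (x t) $ 3 \<le> - e1 * x t $ 3" unfolding field_comp k3[of t] using t k3
        by (simp add: algebra_simps)
    qed (use e1 in auto)
  qed
  show ?thesis
  proof (intro exI[of _ N] conjI)
    show "open N" unfolding N_def by simp
    show "U0 \<epsilon> \<in> N" unfolding N_def using e1 e2 e3 by simp
    show "\<forall>U\<in>N. \<forall>x. x 0 \<in> C \<and> (\<forall>t\<ge>0. (x has_vector_derivative bnn_field U (x t)) (at t within {0..}))
       \<longrightarrow> ((\<lambda>t. x t $ 3) \<longlongrightarrow> 0) at_top"
      using main by blast
  qed
qed

end
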